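(* Let $A,X^1,\ldots,X^m\in M_n(\mathbb{C})$ with $1\le m\le n$. Let $B$ be the $\binom{n}{m}\times\binom{n}{m}$ matrix indexed by $Q_{m,n}$ whose $(\mathcal{J},\mathcal{I})$-entry is $\operatorname{per}A(\mathcal{I}|\mathcal{J})$, and let $C=P_m(X^1\vee\cdots\vee X^m)P_m$, viewed as the $\binom{n}{m}\times\binom{n}{m}$ matrix indexed by $Q_{m,n}$ (with respect to the basis $\{e_\alpha:\alpha\in Q_{m,n}\}$). Then $$D^m\operatorname{per}(A)(X^1,\ldots,X^m)=m!\,\operatorname{tr}(BC).$$ In particular $D^m\operatorname{per}(A)(X,\ldots,X)=m!\,\operatorname{tr}\big(B\,P_m(\vee^mX)P_m\big)$.
   Context: $\mathcal{H}=\mathbb{C}^n$ with orthonormal basis $e_1,\ldots,e_n$; $G_{m,n}=\{(i_1,\ldots,i_m):1\le i_1\le\cdots\le i_m\le n\}$, $Q_{m,n}\subseteq G_{m,n}$ the strictly increasing tuples. $\vee^m\mathcal{H}$ has orthonormal basis $\{m(\alpha)^{-1/2}e_\alpha:\alpha\in G_{m,n}\}$, where $e_\alpha=e_{\alpha_1}\vee\cdots\vee e_{\alpha_m}$ and $m(\alpha)=m_1!\cdots m_\ell!$ for multiplicities $m_1,\ldots,m_\ell$ of the distinct values in $\alpha$. $X^1\vee\cdots\vee X^m$ is the restriction to $\vee^m\mathcal{H}$ of $\frac{1}{m!}\sum_{\sigma\in S_m}X^{\sigma(1)}\otimes\cdots\otimes X^{\sigma(m)}$; $\vee^mX=X\vee\cdots\vee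 X$. $P_m$ is the orthogonal projection of $\vee^m\mathcal{H}$ onto the span of $\{e_\alpha:\alpha\in Q_{m,n}\}$. $A(\mathcal{I}|\mathcal{J})$ is $A$ with rows $\mathcal{I}$, columns $\mathcal{J}$ deleted; $\operatorname{per}$ is the permanent; $D^m\operatorname{per}(A)(X^1,\ldots,X^m)=\frac{\partial^m}{\partial t_1\cdots\partial t_m}\big|_{t=0}\operatorname{per}(A+\sum_it_iX^i)$. *)

theory Defs
  imports "HOL-Analysis.Analysis"
begin

(* Matrices: nat => nat => complex, with indices 0..<n (0-based instead of 1-based).
   A family X^1..X^m is X :: nat => (nat => nat => complex), with X k for k < m. *)

type_synonym cmat = "nat \<Rightarrow> nat \<Rightarrow> complex"

definition per :: "nat \<Rightarrow> cmat \<Rightarrow> complex" where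
  "per n A = (\<Sum>p | p permutes {0..<n}. \<Prod>i<n. A i (p i))"

(* m-tuples over {0..<n}, i.e. indices of the basis e_{i_1} (x) ... (x) e_{i_m} of H^{(x)m} *)
definition tuples :: "nat \<Rightarrow> nat \<Rightarrow> (nat \<Rightarrow> nat) set" where
  "tuples m n = {0..<m} \<rightarrow>\<^sub>E {0..<n}"

definition Qmn :: "nat \<Rightarrow> nat \<Rightarrow> (nat \<Rightarrow> nat) set" where
  "Qmn m n = {\<alpha> \<in> tuples m n. \<forall>i j. i < j \<and> j < m \<longrightarrow> \<alpha> i < \<alpha> j}"

(* A(I|J): A with rows in I and columns in J deleted, remaining rows/columns
   re-indexed increasingly as 0..<card of complement *)
definition del_mat :: "nat \<Rightarrow> cmat \<Rightarrow> nat set \<Rightarrow> nat set \<Rightarrow> cmat" where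
  "del_mat n A I J = (\<lambda>i j. A (sorted_list_of_set ({0..<n} - I) ! i)
                                 (sorted_list_of_set ({0..<n} - J) ! j))"

(* tensors in H^{(x)m} = coefficient functions on tuples *)
type_synonym tensor = "(nat \<Rightarrow> nat) \<Rightarrow> complex"

definition tinner :: "nat \<Rightarrow> nat \<Rightarrow> tensor \<Rightarrow> tensor \<Rightarrow> complex" where
  "tinner m n v w = (\<Sum>i\<in>tuples m n. v i * cnj (w i))"

(* e_alpha = e_{alpha_1} v ... v e_{alpha_m}
           = (1/sqrt m!) sum_sigma e_{alpha_sigma(1)} (x) ... (x) e_{alpha_sigma(m)} *)
definition sym_vec :: "nat \<Rightarrow> (nat \<Rightarrow> nat) \<Rightarrow> tensor" where
  "sym_vec m \<alpha> = (\<lambda>i. complex_of_real (1 / sqrt (fact m)) *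
      (\<Sum>\<sigma> | \<sigma> permutes {0..<m}.
          if i = restrict (\<alpha> \<circ> \<sigma>) {0..<m} then 1 else 0))"

(* X^1 v ... v X^m = (1/m!) sum_sigma X^{sigma(1)} (x) ... (x) X^{sigma(m)} *)
definition sym_op :: "nat \<Rightarrow> nat \<Rightarrow> (nat \<Rightarrow> cmat) \<Rightarrow> tensor \<Rightarrow> tensor" where
  "sym_op m n X v = (\<lambda>i. \<Sum>j\<in>tuples m n.
      ((1 / fact m) * (\<Sum>\<sigma> | \<sigma> permutes {0..<m}. \<Prod>k<m. X (\<sigma> k) (i k) (j k))) * v j)"

(* P_m: orthogonal projection onto span {e_alpha : alpha in Q_{m,n}}
   (an orthonormal family) *)
definition Pm :: "nat \<Rightarrow> nat \<Rightarrow> tensor \<Rightarrow> tensor" where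
  "Pm m n v = (\<lambda>i. \<Sum>\<alpha>\<in>Qmn m n. tinner m n v (sym_vec m \<alpha>) * sym_vec m \<alpha> i)"

(* matrix of C = P_m (X^1 v ... v X^m) P_m w.r.t. the orthonormal basis {e_alpha : alpha in Q}:
   entry (I,J) = < C e_J, e_I > *)
definition Cmat :: "nat \<Rightarrow> nat \<Rightarrow> (nat \<Rightarrow> cmat) \<Rightarrow> (nat \<Rightarrow> nat) \<Rightarrow> (nat \<Rightarrow> nat) \<Rightarrow> complex" where
  "Cmat m n X I J = tinner m n (Pm m n (sym_op m n X (Pm m n (sym_vec m J)))) (sym_vec m I)"

definition Bmat :: "nat \<Rightarrow> nat \<Rightarrow> cmat \<Rightarrow> (nat \<Rightarrow> nat) \<Rightarrow> (nat \<Rightarrow> nat) \<Rightarrow> complex" where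
  "Bmat m n A J I = per (n - m) (del_mat n A (I ` {0..<m}) (J ` {0..<m}))"

definition trBC :: "nat \<Rightarrow> nat \<Rightarrow> cmat \<Rightarrow> (nat \<Rightarrow> cmat) \<Rightarrow> complex" where
  "trBC m n A X = (\<Sum>J\<in>Qmn m n. \<Sum>I\<in>Qmn m n. Bmat m n A J I * Cmat m n X I J)"

fun pderivs :: "nat \<Rightarrow> ((nat \<Rightarrow> complex) \<Rightarrow> complex) \<Rightarrow> (nat \<Rightarrow> complex) \<Rightarrow> complex" where
  "pderivs 0 g = g"
| "pderivs (Suc k) g = (\<lambda>t. deriv (\<lambda>s. pderivs k g (t(k := s))) (t k))"

(* D^m per(A)(X^1,...,X^m) = d^m/dt_1...dt_m |_{t=0} per(A + sum_i t_i X^i) *)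
definition Dper :: "nat \<Rightarrow> nat \<Rightarrow> cmat \<Rightarrow> (nat \<Rightarrow> cmat) \<Rightarrow> complex" where
  "Dper m n A X = pderivs m (\<lambda>t. per n (\<lambda>i j. A i j + (\<Sum>k<m. t k * X k i j))) (\<lambda>_. 0)"

end

theory Submission
  imports Defs
begin

definition Inj :: "nat \<Rightarrow> 'a set \<Rightarrow> (nat \<Rightarrow> 'a) set" where
  "Inj k S = {r \<in> {0..<k} \<rightarrow>\<^sub>E S. inj_on r {0..<k}}"

lemma finite_Inj: "finite S \<Longrightarrow> finite (Inj k S)"
  unfolding Inj_def by (rule finite_subset[of _ "{0..<k} \<rightarrow>\<^sub>E S"]) (auto intro: finite_PiE)

lemma Inj_0: "Inj 0 S = {\<lambda>_. undefined}"
  unfolding Inj_def by auto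

lemma Inj_upd:
  assumes "r \<in> Inj k S" "i0 \<in> S" "i0 \<notin> r ` {0..<k}"
  shows "r(k := i0) \<in> Inj (Suc k) S"
proof -
  have 1: "r(k := i0) \<in> {0..<Suc k} \<rightarrow>\<^sub>E S"
    using assms(1,2) unfolding Inj_def by (auto simp: PiE_iff extensional_def)
  have "inj_on r {0..<k}" using assms(1) unfolding Inj_def by simp
  then have "inj_on (r(k := i0)) {0..<k}" by (simp add: inj_on_def)
  moreover have "(r(k := i0)) ` {0..<k} = r ` {0..<k}" by auto
  ultimately have "inj_on (r(k := i0)) (insert k {0..<k})"
    using assms(3) by (simp add: inj_on_insert)
  then have "inj_on (r(k := i0)) {0..<Suc k}" by (simp add: atLeast0_lessThan_Suc)
  with 1 show ?thesis unfolding Inj_def by simp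
qed

lemma Inj_restr:
  assumes "r' \<in> Inj (Suc k) S"
  shows "r'(k := undefined) \<in> Inj k S" "r' k \<in> S - (r'(k := undefined)) ` {0..<k}"
proof -
  have a: "r' \<in> {0..<Suc k} \<rightarrow>\<^sub>E S" "inj_on r' (insert k {0..<k})"
    using assms unfolding Inj_def by (auto simp: atLeast0_lessThan_Suc)
  have "r'(k := undefined) \<in> {0..<k} \<rightarrow>\<^sub>E S"
    using a(1) by (auto simp: PiE_iff extensional_def)
  moreover have "inj_on (r'(k := undefined)) {0..<k}"
    using a(2) by (auto simp: inj_on_def)
  ultimately show "r'(k := undefined) \<in> Inj k S" unfolding Inj_def by simp
  have "(r'(k := undefined)) ` {0..<k} = r' ` {0..<k}" by auto
  moreover have "r' k \<notin> r' ` {0..<k}" using a(2) by (simp add: inj_on_insert)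
  moreover have "r' k \<in> S" using a(1) by (auto simp: PiE_iff)
  ultimately show "r' k \<in> S - (r'(k := undefined)) ` {0..<k}" by simp
qed

lemma Inj_extend:
  fixes H :: "(nat \<Rightarrow> 'a) \<Rightarrow> complex"
  assumes "finite S"
  shows "(\<Sum>r\<in>Inj k S. \<Sum>i0\<in>S - r ` {0..<k}. H (r(k := i0))) = (\<Sum>r'\<in>Inj (Suc k) S. H r')"
proof -
  let ?Sg = "Sigma (Inj k S) (\<lambda>r. S - r ` {0..<k})"
  let ?f = "\<lambda>z. (fst z)(k := snd z)"
  have "(\<Sum>r\<in>Inj k S. \<Sum>i0\<in>S - r ` {0..<k}. H (r(k := i0))) = (\<Sum>z\<in>?Sg. H (?f z))"
    by (subst sum.Sigma) (auto simp: finite_Inj assms split_def)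
  also have "\<dots> = (\<Sum>r'\<in>?f ` ?Sg. H r')"
  proof (rule sum.reindex[symmetric, unfolded comp_def])
    show "inj_on ?f ?Sg"
    proof (rule inj_onI)
      fix z z' assume z: "z \<in> ?Sg" "z' \<in> ?Sg" and e: "?f z = ?f z'"
      obtain r i where zr: "z = (r, i)" by (cases z)
      obtain r' i' where zr': "z' = (r', i')" by (cases z')
      have a: "r \<in> Inj k S" "r' \<in> Inj k S" "r(k := i) = r'(k := i')"
        using z e zr zr' by auto
      then have "i = i'" by (metis fun_upd_same)
      moreover have "r = r'"
      proof
        fix x show "r x = r' x"
        proof (cases "x = k")
          case True
          have "r k = undefined" "r' k = undefined" using a(1,2) unfolding Inj_def
            by (auto simp: PiE_iff extensional_def)
          then show ?thesis using True by simp
        next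
          case False then show ?thesis using a(3) by (metis fun_upd_other)
        qed
      qed
      ultimately show "z = z'" using zr zr' by simp
    qed
  qed
  also have "?f ` ?Sg = Inj (Suc k) S"
  proof
    show "?f ` ?Sg \<subseteq> Inj (Suc k) S"
      using Inj_upd by force
  next
    show "Inj (Suc k) S \<subseteq> ?f ` ?Sg"
    proof
      fix r' assume a: "r' \<in> Inj (Suc k) S"
      let ?r = "r'(k := undefined)"
      have "(?r, r' k) \<in> ?Sg" using Inj_restr[OF a] by simp
      moreover have "r' = ?f (?r, r' k)" by simp
      ultimately show "r' \<in> ?f ` ?Sg" by blast
    qed
  qed
  finally show ?thesis .
qed

lemma DERIV_prod_affine:
  fixes b y :: "'i \<Rightarrow> complex"
  assumes "finite T"
  shows "((\<lambda>s. \<Prod>i\<in>T. b i + s * y i) has_field_derivative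
           (\<Sum>i0\<in>T. y i0 * (\<Prod>i\<in>T - {i0}. b i + s * y i))) (at s)"
  using assms
proof (induction T rule: finite_induct)
  case empty
  then show ?case by simp
next
  case (insert x F)
  have "((\<lambda>s. (b x + s * y x) * (\<Prod>i\<in>F. b i + s * y i)) has_field_derivative
      (y x * (\<Prod>i\<in>F. b i + s * y i) + (b x + s * y x) * (\<Sum>i0\<in>F. y i0 * (\<Prod>i\<in>F - {i0}. b i + s * y i)))) (at s)"
    by (rule DERIV_mult insert.IH derivative_eq_intros refl | simp)+
  moreover have "(\<Sum>i0\<in>insert x F. y i0 * (\<Prod>i\<in>insert x F - {i0}. b i + s * y i))
     = y x * (\<Prod>i\<in>F. b i + s * y i) + (b x + s * y x) * (\<Sum>i0\<in>F. y i0 * (\<Prod>i\<in>F - {i0}. b i + s * y i))"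
  proof -
    have "(\<Sum>i0\<in>F. y i0 * (\<Prod>i\<in>insert x F - {i0}. b i + s * y i))
        = (\<Sum>i0\<in>F. (b x + s * y x) * (y i0 * (\<Prod>i\<in>F - {i0}. b i + s * y i)))"
    proof (rule sum.cong[OF refl])
      fix i0 assume "i0 \<in> F"
      then have "insert x F - {i0} = insert x (F - {i0})" using insert by auto
      then show "y i0 * (\<Prod>i\<in>insert x F - {i0}. b i + s * y i) = (b x + s * y x) * (y i0 * (\<Prod>i\<in>F - {i0}. b i + s * y i))"
        using insert by simp
    qed
    moreover have "insert x F - {x} = F" using insert by auto
    ultimately show ?thesis using insert by (simp add: sum_distrib_left sum.insert)
  qed
  ultimately show ?case using insert by simp
qed

lemma sum_upd:
  fixes t :: "nat \<Rightarrow> complex"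
  assumes "k < m"
  shows "(\<Sum>j<m. (t(k := s)) j * y j) = (\<Sum>j<m. t j * y j) - t k * y k + s * y k"
proof -
  have "(\<Sum>j<m. (t(k := s)) j * y j) = (t(k:=s)) k * y k + (\<Sum>j\<in>{..<m}-{k}. (t(k := s)) j * y j)"
    using assms by (subst sum.remove[of _ k]) auto
  also have "(\<Sum>j\<in>{..<m}-{k}. (t(k := s)) j * y j) = (\<Sum>j\<in>{..<m}-{k}. t j * y j)"
    by (rule sum.cong) auto
  also have "(\<Sum>j<m. t j * y j) = t k * y k + (\<Sum>j\<in>{..<m}-{k}. t j * y j)"
    using assms by (subst sum.remove[of _ k]) auto
  ultimately show ?thesis by simp
qed

lemma pderivs_main:
  fixes a :: "'p \<Rightarrow> 'i \<Rightarrow> complex" and x :: "'p \<Rightarrow> nat \<Rightarrow> 'i \<Rightarrow> complex"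
  assumes "finite P" "finite S" "k \<le> m"
  shows "pderivs k (\<lambda>t. \<Sum>p\<in>P. \<Prod>i\<in>S. a p i + (\<Sum>j<m. t j * x p j i)) =
    (\<lambda>t. \<Sum>p\<in>P. \<Sum>r\<in>Inj k S. (\<Prod>j<k. x p j (r j)) * (\<Prod>i\<in>S - r ` {0..<k}. a p i + (\<Sum>j<m. t j * x p j i)))"
  using assms(3)
proof (induction k)
  case 0
  then show ?case by (simp add: Inj_0)
next
  case (Suc k)
  then have km: "k < m" by simp
  have IH: "pderivs k (\<lambda>t. \<Sum>p\<in>P. \<Prod>i\<in>S. a p i + (\<Sum>j<m. t j * x p j i)) =
    (\<lambda>t. \<Sum>p\<in>P. \<Sum>r\<in>Inj k S. (\<Prod>j<k. x p j (r j)) * (\<Prod>i\<in>S - r ` {0..<k}. a p i + (\<Sum>j<m. t j * x p j i)))"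
    using Suc by simp
  show ?case
  proof
    fix t :: "nat \<Rightarrow> complex"
    define L where "L p i = a p i + (\<Sum>j<m. t j * x p j i)" for p i
    define b where "b p i = L p i - t k * x p k i" for p i
    have Lupd: "a p i + (\<Sum>j<m. (t(k:=s)) j * x p j i) = b p i + s * x p k i" for p i s
      unfolding b_def L_def using sum_upd[OF km] by (simp add: algebra_simps)
    have eq: "(\<lambda>s. pderivs k (\<lambda>t. \<Sum>p\<in>P. \<Prod>i\<in>S. a p i + (\<Sum>j<m. t j * x p j i)) (t(k := s)))
        = (\<lambda>s. \<Sum>p\<in>P. \<Sum>r\<in>Inj k S. (\<Prod>j<k. x p j (r j)) * (\<Prod>i\<in>S - r ` {0..<k}. b p i + s * x p k i))"
      by (simp only: IH Lupd)
    have D: "((\<lambda>s. \<Sum>p\<in>P. \<Sum>r\<in>Inj k S. (\<Prod>j<k. x p j (r j)) * (\<Prod>i\<in>S - r ` {0..<k}. b p i + s * x p k i))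
      has_field_derivative (\<Sum>p\<in>P. \<Sum>r\<in>Inj k S. (\<Prod>j<k. x p j (r j)) *
         (\<Sum>i0\<in>S - r ` {0..<k}. x p k i0 * (\<Prod>i\<in>S - r ` {0..<k} - {i0}. b p i + s * x p k i)))) (at s)" for s
      by (intro DERIV_sum DERIV_cmult DERIV_prod_affine) (use assms in auto)
    have "pderivs (Suc k) (\<lambda>t. \<Sum>p\<in>P. \<Prod>i\<in>S. a p i + (\<Sum>j<m. t j * x p j i)) t
       = (\<Sum>p\<in>P. \<Sum>r\<in>Inj k S. (\<Prod>j<k. x p j (r j)) *
         (\<Sum>i0\<in>S - r ` {0..<k}. x p k i0 * (\<Prod>i\<in>S - r ` {0..<k} - {i0}. b p i + t k * x p k i)))"
      by (simp only: pderivs.simps eq) (rule DERIV_imp_deriv[OF D])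
    also have "\<dots> = (\<Sum>p\<in>P. \<Sum>r\<in>Inj k S. \<Sum>i0\<in>S - r ` {0..<k}.
         (\<Prod>j<Suc k. x p j ((r(k:=i0)) j)) * (\<Prod>i\<in>S - (r(k:=i0)) ` {0..<Suc k}. L p i))"
    proof (intro sum.cong refl)
      fix p r
      assume r: "r \<in> Inj k S"
      show "(\<Prod>j<k. x p j (r j)) * (\<Sum>i0\<in>S - r ` {0..<k}. x p k i0 * (\<Prod>i\<in>S - r ` {0..<k} - {i0}. b p i + t k * x p k i))
         = (\<Sum>i0\<in>S - r ` {0..<k}. (\<Prod>j<Suc k. x p j ((r(k:=i0)) j)) * (\<Prod>i\<in>S - (r(k:=i0)) ` {0..<Suc k}. L p i))"
        unfolding sum_distrib_left
      proof (rule sum.cong[OF refl])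
        fix i0 assume "i0 \<in> S - r ` {0..<k}"
        have im: "(r(k:=i0)) ` {0..<Suc k} = insert i0 (r ` {0..<k})"
          by (auto simp: image_def less_Suc_eq)
        have pr: "(\<Prod>j<k. x p j ((r(k:=i0)) j)) = (\<Prod>j<k. x p j (r j))"
          by (rule prod.cong) auto
        show "(\<Prod>j<k. x p j (r j)) * (x p k i0 * (\<Prod>i\<in>S - r ` {0..<k} - {i0}. b p i + t k * x p k i)) =
          (\<Prod>j<Suc k. x p j ((r(k:=i0)) j)) * (\<Prod>i\<in>S - (r(k:=i0)) ` {0..<Suc k}. L p i)"
          using pr unfolding im by (simp add: b_def Diff_insert[symmetric] mult.assoc)
      qed
    qed
    also have "\<dots> = (\<Sum>p\<in>P. \<Sum>r\<in>Inj (Suc k) S. (\<Prod>j<Suc k. x p j (r j)) * (\<Prod>i\<in>S - r ` {0..<Suc k}. L p i))"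
      by (intro sum.cong refl Inj_extend[OF assms(2)])
    finally show "pderivs (Suc k) (\<lambda>t. \<Sum>p\<in>P. \<Prod>i\<in>S. a p i + (\<Sum>j<m. t j * x p j i)) t =
       (\<Sum>p\<in>P. \<Sum>r\<in>Inj (Suc k) S. (\<Prod>j<Suc k. x p j (r j)) * (\<Prod>i\<in>S - r ` {0..<Suc k}. a p i + (\<Sum>j<m. t j * x p j i)))"
      unfolding L_def .
  qed
qed

lemma Dper_formula:
  assumes "m \<le> n"
  shows "Dper m n A X = (\<Sum>p\<in>{p. p permutes {0..<n}}. \<Sum>r\<in>Inj m {..<n}.
     (\<Prod>j<m. X j (r j) (p (r j))) * (\<Prod>i\<in>{..<n} - r ` {0..<m}. A i (p i)))"
proof -
  have "(\<lambda>t. per n (\<lambda>i j. A i j + (\<Sum>k<m. t k * X k i j))) =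
    (\<lambda>t. \<Sum>p\<in>{p. p permutes {0..<n}}. \<Prod>i\<in>{..<n}. A i (p i) + (\<Sum>j<m. t j * X j i (p i)))"
    unfolding per_def by simp
  then have "Dper m n A X = pderivs m (\<lambda>t. \<Sum>p\<in>{p. p permutes {0..<n}}. \<Prod>i\<in>{..<n}. A i (p i) + (\<Sum>j<m. t j * X j i (p i))) (\<lambda>_. 0)"
    unfolding Dper_def by simp
  also have "\<dots> = (\<Sum>p\<in>{p. p permutes {0..<n}}. \<Sum>r\<in>Inj m {..<n}.
     (\<Prod>j<m. X j (r j) (p (r j))) * (\<Prod>i\<in>{..<n} - r ` {0..<m}. A i (p i) + (\<Sum>j<m. 0 * X j i (p i))))"
    by (subst pderivs_main[where a="\<lambda>p i. A i (p i)" and x = "\<lambda>p j i. X j i (p i)"]) (auto simp: finite_permutations)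
  finally show ?thesis by simp
qed

lemma Qmn_mem: "I \<in> Qmn m n \<longleftrightarrow> I \<in> {0..<m} \<rightarrow>\<^sub>E {..<n} \<and> (\<forall>i j. i < j \<and> j < m \<longrightarrow> I i < I j)"
  unfolding Qmn_def tuples_def by (simp add: atLeast0LessThan)

lemma Qmn_inj: "I \<in> Qmn m n \<Longrightarrow> inj_on I {0..<m}"
  unfolding Qmn_mem inj_on_def by (metis atLeastLessThan_iff linorder_neqE_nat less_irrefl)

lemma Qmn_list: "I \<in> Qmn m n \<Longrightarrow> sorted_wrt (<) (map I [0..<m])"
  unfolding Qmn_mem sorted_wrt_iff_nth_less by auto

lemma Qmn_unique:
  assumes "I \<in> Qmn m n" "I' \<in> Qmn m n" "I ` {0..<m} = I' ` {0..<m}"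
  shows "I = I'"
proof -
  have "map I [0..<m] = map I' [0..<m]"
    by (rule strict_sorted_equal[OF Qmn_list[OF assms(2)] Qmn_list[OF assms(1)]]) (use assms(3) in simp)
  then have e: "\<And>k. k < m \<Longrightarrow> I k = I' k" by (metis map_eq_conv atLeastLessThan_iff set_upt zero_le)
  show ?thesis
  proof
    fix k show "I k = I' k"
    proof (cases "k < m")
      case True then show ?thesis using e by simp
    next
      case False then show ?thesis using assms(1,2) unfolding Qmn_mem by (auto simp: PiE_iff extensional_def)
    qed
  qed
qed

definition phi :: "nat \<Rightarrow> (nat \<Rightarrow> nat) \<times> (nat \<Rightarrow> nat) \<Rightarrow> (nat \<Rightarrow> nat)" where
  "phi m z = restrict (fst z \<circ> snd z) {0..<m}"

lemma phi_image_set: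
  assumes "\<tau> permutes {0..<m}"
  shows "(phi m (I, \<tau>)) ` {0..<m} = I ` {0..<m}"
proof -
  have "(phi m (I, \<tau>)) ` {0..<m} = I ` (\<tau> ` {0..<m})"
    unfolding phi_def by (auto simp: image_def)
  then show ?thesis using permutes_image[OF assms] by simp
qed

lemma phi_inj: "inj_on (phi m) (Qmn m n \<times> {\<tau>. \<tau> permutes {0..<m}})"
proof (rule inj_onI)
  fix z z' assume z: "z \<in> Qmn m n \<times> {\<tau>. \<tau> permutes {0..<m}}" "z' \<in> Qmn m n \<times> {\<tau>. \<tau> permutes {0..<m}}"
    and e: "phi m z = phi m z'"
  obtain I \<tau> where zz: "z = (I, \<tau>)" by (cases z)
  obtain I' \<tau>' where zz': "z' = (I', \<tau>')" by (cases z')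
  have I: "I \<in> Qmn m n" "I' \<in> Qmn m n" and t: "\<tau> permutes {0..<m}" "\<tau>' permutes {0..<m}"
    using z zz zz' by auto
  have "I ` {0..<m} = I' ` {0..<m}"
    using phi_image_set[OF t(1), of I] phi_image_set[OF t(2), of I'] e zz zz' by simp
  then have II: "I = I'" using Qmn_unique I by blast
  have "\<tau> = \<tau>'"
  proof
    fix k show "\<tau> k = \<tau>' k"
    proof (cases "k < m")
      case True
      have "phi m z k = phi m z' k" using e by simp
      then have "I (\<tau> k) = I (\<tau>' k)" using True zz zz' II by (simp add: phi_def)
      moreover have "\<tau> k \<in> {0..<m}" "\<tau>' k \<in> {0..<m}" using True t permutes_in_image by fastforce+
      ultimately show ?thesis using Qmn_inj[OF I(1)] by (meson inj_onD)
    next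
      case False
      then show ?thesis using t by (simp add: permutes_def)
    qed
  qed
  then show "z = z'" using zz zz' II by simp
qed

lemma phi_into:
  assumes "I \<in> Qmn m n" "\<tau> permutes {0..<m}"
  shows "phi m (I, \<tau>) \<in> Inj m {..<n}"
proof -
  have "phi m (I, \<tau>) \<in> {0..<m} \<rightarrow>\<^sub>E {..<n}"
    using assms permutes_in_image[OF assms(2)] unfolding phi_def Qmn_mem by (auto simp: PiE_iff)
  moreover have "inj_on (I \<circ> \<tau>) {0..<m}"
    using Qmn_inj[OF assms(1)] permutes_inj_on[OF assms(2)] permutes_image[OF assms(2)]
    by (simp add: comp_inj_on)
  then have "inj_on (phi m (I, \<tau>)) {0..<m}" unfolding phi_def by (simp add: inj_on_def)
  ultimately show ?thesis unfolding Inj_def by simp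
qed

lemma phi_onto:
  assumes r: "r \<in> Inj m {..<n}"
  shows "r \<in> phi m ` (Qmn m n \<times> {\<tau>. \<tau> permutes {0..<m}})"
proof -
  have rP: "r \<in> {0..<m} \<rightarrow>\<^sub>E {..<n}" and ri: "inj_on r {0..<m}" using r unfolding Inj_def by auto
  define L where "L = sorted_list_of_set (r ` {0..<m})"
  have sL: "set L = r ` {0..<m}" unfolding L_def by simp
  have lL: "length L = m" unfolding L_def using ri by (simp add: card_image)
  have stL: "sorted_wrt (<) L" unfolding L_def by simp
  have dL: "distinct L" unfolding L_def by simp
  define I where "I = restrict ((!) L) {0..<m}"
  have bL: "bij_betw ((!) L) {0..<m} (set L)" using dL lL by (intro bij_betw_nth) auto
  have IQ: "I \<in> Qmn m n"
    unfolding Qmn_mem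
  proof
    show "I \<in> {0..<m} \<rightarrow>\<^sub>E {..<n}"
    proof -
      have "L ! k \<in> {..<n}" if "k < m" for k
        using nth_mem[of k L] that lL sL rP by auto
      then show ?thesis unfolding I_def by auto
    qed
    show "\<forall>i j. i < j \<and> j < m \<longrightarrow> I i < I j"
      using stL lL unfolding I_def sorted_wrt_iff_nth_less by auto
  qed
  define \<tau> where "\<tau> k = (if k < m then the_inv_into {0..<m} ((!) L) (r k) else k)" for k
  have br: "bij_betw r {0..<m} (set L)" using ri sL by (simp add: bij_betw_def)
  have "bij_betw (the_inv_into {0..<m} ((!) L) \<circ> r) {0..<m} {0..<m}"
    by (rule bij_betw_trans[OF br bij_betw_the_inv_into[OF bL]])
  then have "bij_betw \<tau> {0..<m} {0..<m}"
    by (rule iffD1[OF bij_betw_cong, rotated]) (simp add: \<tau>_def)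
  then have tP: "\<tau> permutes {0..<m}" by (rule bij_imp_permutes) (simp add: \<tau>_def)
  have "phi m (I, \<tau>) = r"
  proof
    fix k show "phi m (I, \<tau>) k = r k"
    proof (cases "k < m")
      case True
      have "\<tau> k \<in> {0..<m}" using tP True permutes_in_image by fastforce
      then have "phi m (I, \<tau>) k = L ! (the_inv_into {0..<m} ((!) L) (r k))"
        using True by (simp add: phi_def I_def \<tau>_def)
      also have "\<dots> = r k"
        by (rule f_the_inv_into_f_bij_betw[OF bL]) (use True sL in auto)
      finally show ?thesis .
    next
      case False
      then show ?thesis using rP by (simp add: phi_def PiE_iff extensional_def)
    qed
  qed
  then show ?thesis using IQ tP by force
qed

lemma phi_image: "phi m ` (Qmn m n \<times> {\<tau>. \<tau> permutes {0..<m}}) = Inj m {..<n}"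
  using phi_into phi_onto by fastforce

lemma finite_Qmn: "finite (Qmn m n)"
  unfolding Qmn_def tuples_def by (rule finite_subset[of _ "{0..<m} \<rightarrow>\<^sub>E {0..<n}"]) (auto intro: finite_PiE)

lemma sum_Inj:
  fixes F :: "(nat \<Rightarrow> nat) \<Rightarrow> complex"
  shows "(\<Sum>r\<in>Inj m {..<n}. F r) = (\<Sum>I\<in>Qmn m n. \<Sum>\<tau>\<in>{\<tau>. \<tau> permutes {0..<m}}. F (phi m (I, \<tau>)))"
proof -
  have "(\<Sum>r\<in>Inj m {..<n}. F r) = (\<Sum>z\<in>Qmn m n \<times> {\<tau>. \<tau> permutes {0..<m}}. F (phi m z))"
    by (subst phi_image[symmetric]) (simp add: sum.reindex[OF phi_inj])
  also have "\<dots> = (\<Sum>I\<in>Qmn m n. \<Sum>\<tau>\<in>{\<tau>. \<tau> permutes {0..<m}}. F (phi m (I, \<tau>)))"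
    by (rule sum.cartesian_product')
  finally show ?thesis .
qed

lemma sorted_bij:
  assumes "finite U"
  shows "bij_betw ((!) (sorted_list_of_set U)) {..<card U} U"
  by (rule bij_betw_nth) (use assms in auto)

lemma fiber_per:
  fixes A :: cmat
  assumes r: "r \<in> Inj m {..<n}" and s: "s \<in> Inj m {..<n}" and mn: "m \<le> n"
  shows "(\<Sum>p\<in>{p. p permutes {0..<n} \<and> (\<forall>k<m. p (r k) = s k)}. \<Prod>i\<in>{0..<n} - r ` {0..<m}. A i (p i))
     = per (n - m) (del_mat n A (r ` {0..<m}) (s ` {0..<m}))"
proof -
  define R where "R = r ` {0..<m}"
  define Sx where "Sx = s ` {0..<m}"
  define U where "U = {0..<n} - R"
  define V where "V = {0..<n} - Sx"
  define N where "N = n - m"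
  define rl where "rl = sorted_list_of_set U"
  define cl where "cl = sorted_list_of_set V"
  have rP: "r \<in> {0..<m} \<rightarrow>\<^sub>E {..<n}" and ri: "inj_on r {0..<m}" using r unfolding Inj_def by auto
  have sP: "s \<in> {0..<m} \<rightarrow>\<^sub>E {..<n}" and si: "inj_on s {0..<m}" using s unfolding Inj_def by auto
  have Rsub: "R \<subseteq> {0..<n}" using rP unfolding R_def by auto
  have Ssub: "Sx \<subseteq> {0..<n}" using sP unfolding Sx_def by auto
  have cR: "card R = m" unfolding R_def using ri by (simp add: card_image)
  have cS: "card Sx = m" unfolding Sx_def using si by (simp add: card_image)
  have cU: "card U = N" unfolding U_def N_def using Rsub cR by (simp add: card_Diff_subset finite_subset)
  have cV: "card V = N" unfolding V_def N_def using Ssub cS by (simp add: card_Diff_subset finite_subset)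
  have bR: "bij_betw ((!) rl) {..<N} U" unfolding rl_def cU[symmetric] by (rule sorted_bij) (simp add: U_def)
  have bC: "bij_betw ((!) cl) {..<N} V" unfolding cl_def cV[symmetric] by (rule sorted_bij) (simp add: V_def)
  define ir where "ir = the_inv_into {..<N} ((!) rl)"
  define ic where "ic = the_inv_into {..<N} ((!) cl)"
  have bir: "bij_betw ir U {..<N}" unfolding ir_def by (rule bij_betw_the_inv_into[OF bR])
  have bic: "bij_betw ic V {..<N}" unfolding ic_def by (rule bij_betw_the_inv_into[OF bC])
  have ir1: "ir (rl ! i) = i" if "i < N" for i
    unfolding ir_def using bR that by (simp add: bij_betw_def the_inv_into_f_f)
  have ir2: "rl ! (ir x) = x" if "x \<in> U" for x
    unfolding ir_def using bR that by (intro f_the_inv_into_f_bij_betw) auto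
  have ic1: "ic (cl ! i) = i" if "i < N" for i
    unfolding ic_def using bC that by (simp add: bij_betw_def the_inv_into_f_f)
  have ic2: "cl ! (ic x) = x" if "x \<in> V" for x
    unfolding ic_def using bC that by (intro f_the_inv_into_f_bij_betw) auto
  define rinv where "rinv = the_inv_into {0..<m} r"
  have brr: "bij_betw r {0..<m} R" unfolding R_def using ri by (simp add: bij_betw_def)
  have bss: "bij_betw s {0..<m} Sx" unfolding Sx_def using si by (simp add: bij_betw_def)
  have brinv: "bij_betw rinv R {0..<m}" unfolding rinv_def by (rule bij_betw_the_inv_into[OF brr])
  have rinv1: "rinv (r k) = k" if "k < m" for k
    unfolding rinv_def using ri that by (simp add: the_inv_into_f_f)
  define \<phi> where "\<phi> q x = (if x \<in> R then s (rinv x) else if x \<in> U then cl ! (q (ir x)) else x)" for q :: "nat \<Rightarrow> nat" and x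
  define \<psi> where "\<psi> p i = (if i < N then ic (p (rl ! i)) else i)" for p :: "nat \<Rightarrow> nat" and i
  let ?P = "{q. q permutes {0..<N}}"
  let ?F = "{p. p permutes {0..<n} \<and> (\<forall>k<m. p (r k) = s k)}"
  have RU: "R \<union> U = {0..<n}" "R \<inter> U = {}" using Rsub unfolding U_def by auto
  have SV: "Sx \<union> V = {0..<n}" "Sx \<inter> V = {}" using Ssub unfolding V_def by auto
  have phi_perm: "\<phi> q \<in> ?F" if q: "q permutes {0..<N}" for q
  proof -
    have "bij_betw (s \<circ> rinv) R Sx" by (rule bij_betw_trans[OF brinv bss])
    then have b1: "bij_betw (\<phi> q) R Sx" by (rule iffD1[OF bij_betw_cong, rotated]) (simp add: \<phi>_def)
    have qb: "bij_betw q {..<N} {..<N}" using permutes_imp_bij[OF q] by (simp add: atLeast0LessThan)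
    have "bij_betw ((!) cl \<circ> (q \<circ> ir)) U V" by (rule bij_betw_trans[OF bij_betw_trans[OF bir qb] bC])
    then have b2: "bij_betw (\<phi> q) U V"
      by (rule iffD1[OF bij_betw_cong, rotated]) (use RU in \<open>auto simp: \<phi>_def\<close>)
    have "bij_betw (\<phi> q) (R \<union> U) (Sx \<union> V)" by (rule bij_betw_combine[OF b1 b2]) (use SV in auto)
    then have "\<phi> q permutes {0..<n}" using RU SV
      by (intro bij_imp_permutes) (auto simp: \<phi>_def)
    moreover have "\<forall>k<m. \<phi> q (r k) = s k" using rinv1 by (simp add: \<phi>_def R_def)
    ultimately show ?thesis by simp
  qed
  have pF: "p ` U = V" "bij_betw p U V" if p: "p \<in> ?F" for p
  proof -
    have pp: "p permutes {0..<n}" and pr: "\<forall>k<m. p (r k) = s k" using p by auto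
    have "p ` R = Sx" unfolding R_def Sx_def using pr by (auto simp: image_def)
    moreover have "p ` {0..<n} = {0..<n}" by (rule permutes_image[OF pp])
    ultimately show "p ` U = V" unfolding U_def V_def using permutes_inj[OF pp] by (simp add: image_set_diff)
    then show "bij_betw p U V" using permutes_inj[OF pp] by (simp add: bij_betw_def inj_on_subset[of p UNIV U])
  qed
  have psi_perm: "\<psi> p \<in> ?P" if p: "p \<in> ?F" for p
  proof -
    have "bij_betw (ic \<circ> (p \<circ> (!) rl)) {..<N} {..<N}" by (rule bij_betw_trans[OF bij_betw_trans[OF bR pF(2)[OF p]] bic])
    then have "bij_betw (\<psi> p) {..<N} {..<N}" by (rule iffD1[OF bij_betw_cong, rotated]) (simp add: \<psi>_def)
    then have "\<psi> p permutes {..<N}" by (intro bij_imp_permutes) (auto simp: \<psi>_def)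
    then show ?thesis by (simp add: atLeast0LessThan)
  qed
  have left: "\<psi> (\<phi> q) = q" if q: "q \<in> ?P" for q
  proof
    fix i show "\<psi> (\<phi> q) i = q i"
    proof (cases "i < N")
      case True
      have "rl ! i \<in> U" using bR True by (auto simp: bij_betw_def)
      then have "rl ! i \<notin> R" using RU by auto
      moreover have "q i < N" using q True permutes_in_image[of q "{0..<N}" i] by auto
      ultimately show ?thesis using True `rl ! i \<in> U` by (simp add: \<psi>_def \<phi>_def ir1 ic1)
    next
      case False then show ?thesis using q by (simp add: \<psi>_def permutes_def)
    qed
  qed
  have right: "\<phi> (\<psi> p) = p" if p: "p \<in> ?F" for p
  proof
    fix x show "\<phi> (\<psi> p) x = p x"
    proof (cases "x \<in> R")
      case True
      then obtain k where k: "k < m" "x = r k" unfolding R_def by auto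
      then show ?thesis using p rinv1 True by (simp add: \<phi>_def)
    next
      case nR: False
      show ?thesis
      proof (cases "x \<in> U")
        case True
        have "ir x < N" using bir True by (auto simp: bij_betw_def)
        moreover have "p x \<in> V" using pF(1)[OF p] True by auto
        ultimately show ?thesis using nR True by (simp add: \<phi>_def \<psi>_def ir2 ic2)
      next
        case False
        then have "x \<notin> {0..<n}" using nR RU by auto
        then show ?thesis using nR False p by (simp add: \<phi>_def permutes_def)
      qed
    qed
  qed
  have bij: "bij_betw \<phi> ?P ?F"
    by (rule bij_betw_byWitness[where f' = \<psi>]) (use left right phi_perm psi_perm in auto)
  have "per (n - m) (del_mat n A R Sx) = (\<Sum>q\<in>?P. \<Prod>i<N. A (rl ! i) (cl ! (q i)))"
    unfolding per_def del_mat_def N_def rl_def cl_def U_def V_def by simp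
  also have "\<dots> = (\<Sum>q\<in>?P. \<Prod>i\<in>U. A i (\<phi> q i))"
  proof (rule sum.cong[OF refl])
    fix q assume "q \<in> ?P"
    have "(\<Prod>i\<in>U. A i (\<phi> q i)) = (\<Prod>j\<in>{..<N}. A (rl ! j) (\<phi> q (rl ! j)))"
      by (rule prod.reindex_bij_betw[OF bR, symmetric])
    also have "\<dots> = (\<Prod>j<N. A (rl ! j) (cl ! (q j)))"
    proof (rule prod.cong[OF refl])
      fix j assume j: "j \<in> {..<N}"
      have "rl ! j \<in> U" using bR j by (auto simp: bij_betw_def)
      then show "A (rl ! j) (\<phi> q (rl ! j)) = A (rl ! j) (cl ! (q j))"
        using RU j by (auto simp: \<phi>_def ir1)
    qed
    finally show "(\<Prod>i<N. A (rl ! i) (cl ! (q i))) = (\<Prod>i\<in>U. A i (\<phi> q i))" by simp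
  qed
  also have "\<dots> = (\<Sum>p\<in>?F. \<Prod>i\<in>U. A i (p i))"
    by (rule sum.reindex_bij_betw[OF bij])
  finally show ?thesis unfolding U_def R_def Sx_def by simp
qed

abbreviation cc :: "nat \<Rightarrow> complex" where "cc m \<equiv> complex_of_real (1 / sqrt (fact m))"

lemma cc_sq: "cc m * cc m = 1 / fact m"
proof -
  have "(1 / sqrt (fact m :: real)) * (1 / sqrt (fact m)) = 1 / fact m"
    by (simp add: real_sqrt_mult[symmetric])
  then have "complex_of_real ((1 / sqrt (fact m :: real)) * (1 / sqrt (fact m))) = complex_of_real (1 / fact m)"
    by simp
  then show ?thesis by (simp only: of_real_mult) simp
qed

lemma sv_cnj: "cnj (sym_vec m \<alpha> i) = sym_vec m \<alpha> i"
  unfolding sym_vec_def by (auto simp: cnj_sum intro!: sum.cong)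

lemma sv_alt: "sym_vec m \<alpha> i = cc m * (\<Sum>\<sigma> | \<sigma> permutes {0..<m}. if i = phi m (\<alpha>, \<sigma>) then 1 else 0)"
  unfolding sym_vec_def phi_def by simp

lemma phi_tuples: "\<alpha> \<in> Qmn m n \<Longrightarrow> \<sigma> permutes {0..<m} \<Longrightarrow> phi m (\<alpha>, \<sigma>) \<in> tuples m n"
  using phi_into[of \<alpha> m n \<sigma>] unfolding Inj_def tuples_def by (simp add: atLeast0LessThan)

lemma finite_tuples: "finite (tuples m n)"
  unfolding tuples_def by (auto intro: finite_PiE)

lemma sv_sum:
  assumes "\<alpha> \<in> Qmn m n"
  shows "(\<Sum>i\<in>tuples m n. F i * sym_vec m \<alpha> i) = cc m * (\<Sum>\<sigma> | \<sigma> permutes {0..<m}. F (phi m (\<alpha>, \<sigma>)))"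
proof -
  have "(\<Sum>i\<in>tuples m n. F i * sym_vec m \<alpha> i)
      = cc m * (\<Sum>\<sigma> | \<sigma> permutes {0..<m}. \<Sum>i\<in>tuples m n. if i = phi m (\<alpha>, \<sigma>) then F i else 0)"
    unfolding sv_alt sum_distrib_left
    by (subst sum.swap) (auto intro!: sum.cong simp: algebra_simps)
  also have "\<dots> = cc m * (\<Sum>\<sigma> | \<sigma> permutes {0..<m}. F (phi m (\<alpha>, \<sigma>)))"
    using phi_tuples[OF assms] by (simp add: sum.delta' finite_tuples)
  finally show ?thesis .
qed

lemma orth:
  assumes "\<alpha> \<in> Qmn m n" "\<beta> \<in> Qmn m n"
  shows "tinner m n (sym_vec m \<alpha>) (sym_vec m \<beta>) = (if \<alpha> = \<beta> then 1 else 0)"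
proof -
  let ?P = "{\<sigma>. \<sigma> permutes {0..<m}}"
  have "tinner m n (sym_vec m \<alpha>) (sym_vec m \<beta>) = (\<Sum>i\<in>tuples m n. sym_vec m \<alpha> i * sym_vec m \<beta> i)"
    unfolding tinner_def sv_cnj ..
  also have "\<dots> = cc m * (\<Sum>\<sigma>'\<in>?P. sym_vec m \<alpha> (phi m (\<beta>, \<sigma>')))"
    by (rule sv_sum[OF assms(2)])
  also have "\<dots> = cc m * cc m * (\<Sum>\<sigma>'\<in>?P. \<Sum>\<sigma>\<in>?P. if phi m (\<beta>, \<sigma>') = phi m (\<alpha>, \<sigma>) then 1 else 0)"
    unfolding sv_alt by (simp add: sum_distrib_left mult.assoc)
  also have "(\<Sum>\<sigma>'\<in>?P. \<Sum>\<sigma>\<in>?P. if phi m (\<beta>, \<sigma>') = phi m (\<alpha>, \<sigma>) then 1 else 0)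
       = (\<Sum>\<sigma>'\<in>?P. \<Sum>\<sigma>\<in>?P. if \<beta> = \<alpha> \<and> \<sigma>' = \<sigma> then (1::complex) else 0)"
  proof (intro sum.cong refl)
    fix \<sigma> \<sigma>' assume "\<sigma> \<in> ?P" "\<sigma>' \<in> ?P"
    then have "phi m (\<beta>, \<sigma>') = phi m (\<alpha>, \<sigma>) \<longleftrightarrow> (\<beta>, \<sigma>') = (\<alpha>, \<sigma>)"
      using inj_onD[OF phi_inj[of m n]] assms by blast
    then show "(if phi m (\<beta>, \<sigma>') = phi m (\<alpha>, \<sigma>) then 1 else 0) = (if \<beta> = \<alpha> \<and> \<sigma>' = \<sigma> then (1::complex) else 0)"
      by simp
  qed
  also have "\<dots> = (if \<alpha> = \<beta> then of_nat (card ?P) else 0)"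
    by (cases "\<alpha> = \<beta>") (auto simp: sum.delta finite_permutations)
  also have "card ?P = fact m" by (rule card_permutations) auto
  finally have "tinner m n (sym_vec m \<alpha>) (sym_vec m \<beta>) = cc m * cc m * (if \<alpha> = \<beta> then of_nat (fact m) else 0)" .
  moreover have "cc m * cc m * of_nat (fact m) = 1" unfolding cc_sq by simp
  ultimately show ?thesis by (cases "\<alpha> = \<beta>") auto
qed

lemma Pm_sv:
  assumes "J \<in> Qmn m n"
  shows "Pm m n (sym_vec m J) = sym_vec m J"
proof
  fix i
  have "Pm m n (sym_vec m J) i = (\<Sum>\<alpha>\<in>Qmn m n. if J = \<alpha> then sym_vec m \<alpha> i else 0)"
    unfolding Pm_def by (intro sum.cong refl) (simp add: orth assms)
  also have "\<dots> = sym_vec m J i" using assms by (simp add: sum.delta finite_Qmn)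
  finally show "Pm m n (sym_vec m J) i = sym_vec m J i" .
qed

lemma tinner_Pm:
  assumes "I \<in> Qmn m n"
  shows "tinner m n (Pm m n w) (sym_vec m I) = tinner m n w (sym_vec m I)"
proof -
  have "tinner m n (Pm m n w) (sym_vec m I)
      = (\<Sum>\<alpha>\<in>Qmn m n. tinner m n w (sym_vec m \<alpha>) * tinner m n (sym_vec m \<alpha>) (sym_vec m I))"
    unfolding tinner_def Pm_def sum_distrib_right sum_distrib_left
    by (subst sum.swap) (simp add: mult.assoc)
  also have "\<dots> = (\<Sum>\<alpha>\<in>Qmn m n. if \<alpha> = I then tinner m n w (sym_vec m I) else 0)"
    by (intro sum.cong refl) (simp add: orth assms)
  also have "\<dots> = tinner m n w (sym_vec m I)" using assms by (simp add: sum.delta' finite_Qmn)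
  finally show ?thesis .
qed

lemma sigma_elim:
  fixes m :: nat
  assumes \<sigma>: "\<sigma> permutes {0..<m}"
  shows "(\<Sum>\<tau> | \<tau> permutes {0..<m}. \<Sum>\<rho> | \<rho> permutes {0..<m}. \<Prod>k<m. X (\<sigma> k) (I (\<tau> k)) (J (\<rho> k)))
       = (\<Sum>\<tau> | \<tau> permutes {0..<m}. \<Sum>\<rho> | \<rho> permutes {0..<m}. \<Prod>k<m. X k (I (\<tau> k)) (J (\<rho> k)))"
proof -
  let ?P = "{\<tau>. \<tau> permutes {0..<m}}"
  have si: "inv \<sigma> permutes {0..<m}" by (rule permutes_inv[OF \<sigma>])
  have b: "bij_betw \<sigma> {..<m} {..<m}" unfolding atLeast0LessThan[symmetric] by (rule permutes_imp_bij[OF \<sigma>])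
  have "(\<Prod>k<m. X (\<sigma> k) (I (\<tau> k)) (J (\<rho> k))) = (\<Prod>k<m. X k (I ((\<tau> \<circ> inv \<sigma>) k)) (J ((\<rho> \<circ> inv \<sigma>) k)))"
    for \<tau> \<rho> :: "nat \<Rightarrow> nat"
  proof -
    have "(\<Prod>k<m. X k (I ((\<tau> \<circ> inv \<sigma>) k)) (J ((\<rho> \<circ> inv \<sigma>) k)))
        = (\<Prod>k<m. X (\<sigma> k) (I ((\<tau> \<circ> inv \<sigma>) (\<sigma> k))) (J ((\<rho> \<circ> inv \<sigma>) (\<sigma> k))))"
      by (rule prod.reindex_bij_betw[OF b, symmetric])
    also have "\<dots> = (\<Prod>k<m. X (\<sigma> k) (I (\<tau> k)) (J (\<rho> k)))"
      using permutes_inverses(2)[OF \<sigma>] by simp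
    finally show ?thesis by simp
  qed
  then have "(\<Sum>\<tau>\<in>?P. \<Sum>\<rho>\<in>?P. \<Prod>k<m. X (\<sigma> k) (I (\<tau> k)) (J (\<rho> k)))
      = (\<Sum>\<tau>\<in>?P. \<Sum>\<rho>\<in>?P. \<Prod>k<m. X k (I ((\<tau> \<circ> inv \<sigma>) k)) (J ((\<rho> \<circ> inv \<sigma>) k)))"
    by simp
  also have "\<dots> = (\<Sum>\<tau>\<in>?P. \<Sum>\<rho>\<in>?P. \<Prod>k<m. X k (I ((\<tau> \<circ> inv \<sigma>) k)) (J (\<rho> k)))"
    by (rule sum.cong[OF refl], rule sum_permutations_compose_right[OF si, symmetric])
  also have "\<dots> = (\<Sum>\<tau>\<in>?P. \<Sum>\<rho>\<in>?P. \<Prod>k<m. X k (I (\<tau> k)) (J (\<rho> k)))"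
    by (rule sum_permutations_compose_right[OF si, symmetric])
  finally show ?thesis .
qed

lemma Cmat_eq:
  assumes I: "I \<in> Qmn m n" and J: "J \<in> Qmn m n"
  shows "Cmat m n X I J = (1 / fact m) *
    (\<Sum>\<tau> | \<tau> permutes {0..<m}. \<Sum>\<rho> | \<rho> permutes {0..<m}. \<Prod>k<m. X k (I (\<tau> k)) (J (\<rho> k)))"
proof -
  let ?P = "{\<tau>. \<tau> permutes {0..<m}}"
  define K where "K i j = (1 / fact m) * (\<Sum>\<sigma>\<in>?P. \<Prod>k<m. X (\<sigma> k) (i k) (j k))" for i j :: "nat \<Rightarrow> nat"
  have "Cmat m n X I J = tinner m n (sym_op m n X (sym_vec m J)) (sym_vec m I)"
    unfolding Cmat_def by (simp add: Pm_sv[OF J] tinner_Pm[OF I])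
  also have "\<dots> = (\<Sum>i\<in>tuples m n. (\<Sum>j\<in>tuples m n. K i j * sym_vec m J j) * sym_vec m I i)"
    unfolding tinner_def sym_op_def sv_cnj K_def ..
  also have "\<dots> = (\<Sum>i\<in>tuples m n. (cc m * (\<Sum>\<rho>\<in>?P. K i (phi m (J, \<rho>)))) * sym_vec m I i)"
    by (simp only: sv_sum[OF J])
  also have "\<dots> = cc m * (\<Sum>\<tau>\<in>?P. cc m * (\<Sum>\<rho>\<in>?P. K (phi m (I, \<tau>)) (phi m (J, \<rho>))))"
    by (rule sv_sum[OF I])
  also have "\<dots> = cc m * cc m * (\<Sum>\<tau>\<in>?P. \<Sum>\<rho>\<in>?P. K (phi m (I, \<tau>)) (phi m (J, \<rho>)))"
    by (simp add: sum_distrib_left mult.assoc)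
  also have "(\<Sum>\<tau>\<in>?P. \<Sum>\<rho>\<in>?P. K (phi m (I, \<tau>)) (phi m (J, \<rho>)))
     = (1 / fact m) * (\<Sum>\<sigma>\<in>?P. \<Sum>\<tau>\<in>?P. \<Sum>\<rho>\<in>?P. \<Prod>k<m. X (\<sigma> k) (I (\<tau> k)) (J (\<rho> k)))"
  proof -
    have "K (phi m (I, \<tau>)) (phi m (J, \<rho>)) = (1 / fact m) * (\<Sum>\<sigma>\<in>?P. \<Prod>k<m. X (\<sigma> k) (I (\<tau> k)) (J (\<rho> k)))"
      for \<tau> \<rho> unfolding K_def phi_def by (auto intro!: sum.cong prod.cong)
    then show ?thesis
      by (simp add: sum_distrib_left) (subst sum.swap, rule sum.cong[OF refl], subst sum.swap, simp)
  qed
  also have "(\<Sum>\<sigma>\<in>?P. \<Sum>\<tau>\<in>?P. \<Sum>\<rho>\<in>?P. \<Prod>k<m. X (\<sigma> k) (I (\<tau> k)) (J (\<rho> k)))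
     = (\<Sum>\<sigma>\<in>?P. \<Sum>\<tau>\<in>?P. \<Sum>\<rho>\<in>?P. \<Prod>k<m. X k (I (\<tau> k)) (J (\<rho> k)))"
    by (rule sum.cong[OF refl]) (simp add: sigma_elim)
  also have "\<dots> = of_nat (card ?P) * (\<Sum>\<tau>\<in>?P. \<Sum>\<rho>\<in>?P. \<Prod>k<m. X k (I (\<tau> k)) (J (\<rho> k)))"
    by simp
  also have "card ?P = fact m" by (rule card_permutations) auto
  finally show ?thesis by (simp only: cc_sq) simp
qed

lemma group_fiber:
  fixes W :: "(nat \<Rightarrow> nat) \<Rightarrow> complex"
  assumes r: "r \<in> Inj m {..<n}"
  shows "(\<Sum>s\<in>Inj m {..<n}. \<Sum>p\<in>{p. p permutes {0..<n} \<and> (\<forall>k<m. p (r k) = s k)}. W p)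
       = (\<Sum>p\<in>{p. p permutes {0..<n}}. W p)"
proof -
  let ?g = "\<lambda>p. restrict (p \<circ> r) {0..<m}"
  have rP: "r \<in> {0..<m} \<rightarrow>\<^sub>E {..<n}" and ri: "inj_on r {0..<m}" using r unfolding Inj_def by auto
  have img: "?g ` {p. p permutes {0..<n}} \<subseteq> Inj m {..<n}"
  proof clarify
    fix p assume p: "p permutes {0..<n}"
    have "?g p \<in> {0..<m} \<rightarrow>\<^sub>E {..<n}"
      using rP permutes_in_image[OF p] by (auto simp: PiE_iff)
    moreover have "inj_on (p \<circ> r) {0..<m}"
      using ri permutes_inj[OF p] by (simp add: comp_inj_on inj_on_subset[of p UNIV])
    then have "inj_on (?g p) {0..<m}" by (simp add: inj_on_def)
    ultimately show "?g p \<in> Inj m {..<n}" unfolding Inj_def by simp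
  qed
  have fib: "{p. p permutes {0..<n} \<and> (\<forall>k<m. p (r k) = s k)} = {p \<in> {p. p permutes {0..<n}}. ?g p = s}"
    if s: "s \<in> Inj m {..<n}" for s
  proof -
    have sE: "s \<in> extensional {0..<m}" using s unfolding Inj_def by (auto simp: PiE_iff)
    have "(\<forall>k<m. p (r k) = s k) \<longleftrightarrow> ?g p = s" for p
    proof
      assume "\<forall>k<m. p (r k) = s k"
      then show "?g p = s" using sE by (intro extensionalityI[OF restrict_extensional sE]) auto
    next
      assume "?g p = s"
      then show "\<forall>k<m. p (r k) = s k" by (metis atLeastLessThan_iff comp_apply restrict_apply' zero_le)
    qed
    then show ?thesis by auto
  qed
  show ?thesis
    by (subst sum.group[symmetric, OF finite_permutations[of "{0..<n}"] finite_Inj img, of W])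
       (auto intro!: sum.cong simp: fib)
qed

theorem main:
  fixes A :: cmat and X :: "nat \<Rightarrow> cmat"
  assumes "m \<le> n"
  shows "Dper m n A X = fact m * trBC m n A X"
proof -
  let ?P = "\<lambda>m::nat. {\<tau>. \<tau> permutes {0..<m}}"
  define G where "G r s = per (n - m) (del_mat n A (r ` {0..<m}) (s ` {0..<m})) * (\<Prod>k<m. X k (r k) (s k))"
    for r s :: "nat \<Rightarrow> nat"
  define W where "W p r = (\<Prod>j<m. X j (r j) (p (r j))) * (\<Prod>i\<in>{..<n} - r ` {0..<m}. A i (p i))"
    for p r :: "nat \<Rightarrow> nat"
  have "fact m * trBC m n A X = (\<Sum>J\<in>Qmn m n. \<Sum>I\<in>Qmn m n. Bmat m n A J I * (fact m * Cmat m n X I J))"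
    unfolding trBC_def sum_distrib_left by (simp add: algebra_simps)
  also have "\<dots> = (\<Sum>J\<in>Qmn m n. \<Sum>I\<in>Qmn m n. Bmat m n A J I *
       (\<Sum>\<tau>\<in>?P m. \<Sum>\<rho>\<in>?P m. \<Prod>k<m. X k (I (\<tau> k)) (J (\<rho> k))))"
    by (intro sum.cong refl) (simp add: Cmat_eq)
  also have "\<dots> = (\<Sum>I\<in>Qmn m n. \<Sum>\<tau>\<in>?P m. \<Sum>J\<in>Qmn m n. \<Sum>\<rho>\<in>?P m. G (phi m (I, \<tau>)) (phi m (J, \<rho>)))"
  proof -
    have "G (phi m (I, \<tau>)) (phi m (J, \<rho>)) = Bmat m n A J I * (\<Prod>k<m. X k (I (\<tau> k)) (J (\<rho> k)))"
      if "\<tau> \<in> ?P m" "\<rho> \<in> ?P m" for I J \<tau> \<rho>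
      using that unfolding G_def Bmat_def
      by (simp add: phi_image_set) (simp add: phi_def)
    then have "(\<Sum>I\<in>Qmn m n. \<Sum>\<tau>\<in>?P m. \<Sum>J\<in>Qmn m n. \<Sum>\<rho>\<in>?P m. G (phi m (I, \<tau>)) (phi m (J, \<rho>)))
      = (\<Sum>I\<in>Qmn m n. \<Sum>\<tau>\<in>?P m. \<Sum>J\<in>Qmn m n. \<Sum>\<rho>\<in>?P m. Bmat m n A J I * (\<Prod>k<m. X k (I (\<tau> k)) (J (\<rho> k))))"
      by (intro sum.cong refl) auto
    also have "\<dots> = (\<Sum>I\<in>Qmn m n. \<Sum>J\<in>Qmn m n. \<Sum>\<tau>\<in>?P m. \<Sum>\<rho>\<in>?P m. Bmat m n A J I * (\<Prod>k<m. X k (I (\<tau> k)) (J (\<rho> k))))"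
      by (rule sum.cong[OF refl], rule sum.swap)
    also have "\<dots> = (\<Sum>J\<in>Qmn m n. \<Sum>I\<in>Qmn m n. Bmat m n A J I * (\<Sum>\<tau>\<in>?P m. \<Sum>\<rho>\<in>?P m. \<Prod>k<m. X k (I (\<tau> k)) (J (\<rho> k))))"
      by (subst sum.swap) (simp add: sum_distrib_left)
    finally show ?thesis by simp
  qed
  also have "\<dots> = (\<Sum>r\<in>Inj m {..<n}. \<Sum>s\<in>Inj m {..<n}. G r s)"
    by (simp add: sum_Inj)
  also have "\<dots> = (\<Sum>r\<in>Inj m {..<n}. \<Sum>s\<in>Inj m {..<n}.
       \<Sum>p\<in>{p. p permutes {0..<n} \<and> (\<forall>k<m. p (r k) = s k)}. W p r)"
  proof (intro sum.cong refl)
    fix r s assume r: "r \<in> Inj m {..<n}" and s: "s \<in> Inj m {..<n}"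
    have "G r s = (\<Prod>k<m. X k (r k) (s k)) *
       (\<Sum>p\<in>{p. p permutes {0..<n} \<and> (\<forall>k<m. p (r k) = s k)}. \<Prod>i\<in>{0..<n} - r ` {0..<m}. A i (p i))"
      unfolding G_def fiber_per[OF r s assms] by simp
    also have "\<dots> = (\<Sum>p\<in>{p. p permutes {0..<n} \<and> (\<forall>k<m. p (r k) = s k)}. W p r)"
      unfolding sum_distrib_left W_def by (intro sum.cong refl) (auto simp: atLeast0LessThan intro!: prod.cong)
    finally show "G r s = \<dots>" .
  qed
  also have "\<dots> = (\<Sum>r\<in>Inj m {..<n}. \<Sum>p\<in>?P n. W p r)"
    by (intro sum.cong refl group_fiber)
  also have "\<dots> = (\<Sum>p\<in>?P n. \<Sum>r\<in>Inj m {..<n}. W p r)"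
    by (rule sum.swap)
  also have "\<dots> = Dper m n A X"
    unfolding Dper_formula[OF assms] W_def ..
  finally show ?thesis ..
qed

theorem theorem2p5:
  fixes A :: cmat and X :: "nat \<Rightarrow> cmat" and m n :: nat
  assumes "1 \<le> m" and "m \<le> n"
  shows "Dper m n A X = fact m * trBC m n A X
         \<and> (\<forall>Y :: cmat. Dper m n A (\<lambda>_. Y) = fact m * trBC m n A (\<lambda>_. Y))"
  using main[OF assms(2)] by blast

end
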